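(* Let $M:Z^n\times Z\to[0,B]$ be an $(\epsilon,\delta)$-differentially private evaluation algorithm and let $P$ be an arbitrary distribution over $Z$. Then for every positive integer $k$, $$\mathbb{E}_{S,S'\sim P^n}\Big[\big(\mathcal{E}_{S'}[M(S)]\big)^k\Big]\le e^{k^2\epsilon}\cdot\mathbb{E}_{S\sim P^n}\Big[\big(\mathcal{E}_S[M(S)]+k\delta B\big)^k\Big].$$
   Context: $M$ is an $(\epsilon,\delta)$-differentially private evaluation algorithm if for every $z\in Z$, the randomized output $M(S,z)$ is $(\epsilon,\delta)$-differentially private with respect to $S$: for all $S,S'\in Z^n$ differing in a single element and every set $O$, $\Pr[M(S,z)\in O]\le e^{\epsilon}\Pr[M(S',z)\in O]+\delta$. For $S=(z_1,\dots,z_n)$ and $S'=(z'_1,\dots,z'_n)$ drawn independently from $P^n$, $\mathcal{E}_S[M(S)]=\frac1n\sum_{i\in[n]}\mathbb{E}_M[M(S,z_i)]$ and $\mathcal{E}_{S'}[M(S)]=\frac1n\sum_{i\in[n]}\mathbb{E}_M[M(S,z'_i)]$. *)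

theory Defs
  imports "HOL-Probability.Probability"
begin

text \<open>Samples S in Z^n are represented as (extensional) functions on {..<n},
  i.e. points of the product space of n copies of the data space.\<close>

definition sample_space :: "'z measure \<Rightarrow> nat \<Rightarrow> (nat \<Rightarrow> 'z) measure" where
  "sample_space P n = (\<Pi>\<^sub>M i\<in>{..<n}. P)"

definition neighbours :: "nat \<Rightarrow> (nat \<Rightarrow> 'z) \<Rightarrow> (nat \<Rightarrow> 'z) \<Rightarrow> bool" where
  "neighbours n S S' \<longleftrightarrow> (\<exists>i<n. \<forall>j. j \<noteq> i \<longrightarrow> S j = S' j)"

definition dp_eval ::
  "'z measure \<Rightarrow> nat \<Rightarrow> ((nat \<Rightarrow> 'z) \<Rightarrow> 'z \<Rightarrow> real measure) \<Rightarrow> real \<Rightarrow> real \<Rightarrow> bool" where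
  "dp_eval P n M \<epsilon> \<delta> \<longleftrightarrow>
     (\<forall>z\<in>space P. \<forall>S\<in>space (sample_space P n). \<forall>S'\<in>space (sample_space P n).
        neighbours n S S' \<longrightarrow>
        (\<forall>A\<in>sets borel. measure (M S z) A \<le> exp \<epsilon> * measure (M S' z) A + \<delta>))"

definition eval_mean :: "((nat \<Rightarrow> 'z) \<Rightarrow> 'z \<Rightarrow> real measure) \<Rightarrow> (nat \<Rightarrow> 'z) \<Rightarrow> 'z \<Rightarrow> real" where
  "eval_mean M S z = (\<integral>x. x \<partial>(M S z))"

text \<open>emp_eval n M S T = (1/n) sum_i E_M[M(S, T i)]; so E_S[M(S)] = emp_eval n M S S
  and E_{S'}[M(S)] = emp_eval n M S S'.\<close>
definition emp_eval :: "nat \<Rightarrow> ((nat \<Rightarrow> 'z) \<Rightarrow> 'z \<Rightarrow> real measure) \<Rightarrow> (nat \<Rightarrow> 'z) \<Rightarrow> (nat \<Rightarrow> 'z) \<Rightarrow> real" where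
  "emp_eval n M S T = (1 / real n) * (\<Sum>i<n. eval_mean M S (T i))"

end

theory Submission
  imports Defs "HOL-Probability.Probability"
begin


lemma step_approx:
  fixes h x :: real
  assumes "0 \<le> h" "0 \<le> x" "x \<le> real N * h"
  shows "(\<Sum>j\<in>{1..N}. h * indicator {real j * h<..} x) \<le> x \<and>
         x \<le> (\<Sum>j\<in>{1..N}. h * indicator {real j * h<..} x) + h"
  using assms(3)
proof (induction N)
  case 0
  then show ?case using assms by simp
next
  case (Suc N)
  have new: "indicator {real (Suc N) * h<..} x = (0::real)"
    using Suc.prems by (simp add: indicator_def)
  show ?case
  proof (cases "x \<le> real N * h")
    case True
    have eq: "(\<Sum>j\<in>{1..Suc N}. h * indicator {real j * h<..} x) = (\<Sum>j\<in>{1..N}. h * indicator {real j * h<..} x)"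
      by (simp only: sum.cl_ivl_Suc new) simp
    show ?thesis unfolding eq using Suc.IH[OF True] .
  next
    case False
    have "(\<Sum>j\<in>{1..N}. h * indicator {real j * h<..} x) = (\<Sum>j\<in>{1..N}. h)"
    proof (rule sum.cong)
      fix j assume "j \<in> {1..N}"
      then have "real j * h \<le> real N * h" using assms(1) by (simp add: mult_right_mono)
      then show "h * indicator {real j * h<..} x = h" using False by (simp add: indicator_def)
    qed simp
    then have eq2: "(\<Sum>j\<in>{1..N}. h * indicator {real j * h<..} x) = real N * h" by simp
    have eq: "(\<Sum>j\<in>{1..Suc N}. h * indicator {real j * h<..} x) = (\<Sum>j\<in>{1..N}. h * indicator {real j * h<..} x)"
      by (simp only: sum.cl_ivl_Suc new) simp
    show ?thesis unfolding eq eq2 using False Suc.prems by (simp add: algebra_simps)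
  qed
qed

lemma dp_expect:
  fixes \<mu> \<nu> :: "real measure" and B c \<delta> :: real
  assumes mu: "prob_space \<mu>" and nu: "prob_space \<nu>"
    and smu: "sets \<mu> = sets borel" and snu: "sets \<nu> = sets borel"
    and aemu: "AE x in \<mu>. 0 \<le> x \<and> x \<le> B" and aenu: "AE x in \<nu>. 0 \<le> x \<and> x \<le> B"
    and c: "0 \<le> c" and d: "0 \<le> \<delta>"
    and dom: "\<And>A. A \<in> sets borel \<Longrightarrow> measure \<mu> A \<le> c * measure \<nu> A + \<delta>"
  shows "(\<integral>x. x \<partial>\<mu>) \<le> c * (\<integral>x. x \<partial>\<nu>) + \<delta> * B"
proof (rule field_le_epsilon)
  fix e :: real assume e: "0 < e"
  interpret mu: prob_space \<mu> by fact
  interpret nu: prob_space \<nu> by fact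
  have B: "0 \<le> B"
  proof -
    have "AE x in \<mu>. 0 \<le> B" using aemu by eventually_elim auto
    then show ?thesis by simp
  qed
  obtain N :: nat where N: "B / e < real N" using reals_Archimedean2 by blast
  have Npos: "0 < N" using N B e
    by (metis divide_nonneg_pos not_gr_zero not_less of_nat_0)
  define h where "h = B / real N"
  have h0: "0 \<le> h" using B by (simp add: h_def)
  have hN: "real N * h = B" using Npos by (simp add: h_def)
  have "B < real N * e" using N e by (simp add: pos_divide_less_eq)
  then have he: "h < e" using Npos unfolding h_def by (simp add: pos_divide_less_eq mult.commute)
  define \<phi> where "\<phi> x = (\<Sum>j\<in>{1..N}. h * indicator {real j * h<..} x)" for x :: real
  have idmu: "(\<lambda>x::real. x) \<in> borel_measurable \<mu>" unfolding measurable_cong_sets[OF smu refl] by simp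
  have idnu: "(\<lambda>x::real. x) \<in> borel_measurable \<nu>" unfolding measurable_cong_sets[OF snu refl] by simp
  have intmu: "integrable \<mu> (\<lambda>x. x)"
    by (rule mu.integrable_const_bound[where B=B]) (use aemu idmu in auto)
  have intnu: "integrable \<nu> (\<lambda>x. x)"
    by (rule nu.integrable_const_bound[where B=B]) (use aenu idnu in auto)
  have sets_ind: "{real j * h<..} \<in> sets \<mu>" "{real j * h<..} \<in> sets \<nu>" for j
    using smu snu by auto
  have intind_mu: "integrable \<mu> (\<lambda>x. h * indicator {real j * h<..} x)" for j
    using sets_ind by (intro integrable_mult_right integrable_real_indicator) (auto simp: less_top[symmetric])
  have intind_nu: "integrable \<nu> (\<lambda>x. h * indicator {real j * h<..} x)" for j
    using sets_ind by (intro integrable_mult_right integrable_real_indicator) (auto simp: less_top[symmetric])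
  have intphi_mu: "integrable \<mu> \<phi>" unfolding \<phi>_def by (intro Bochner_Integration.integrable_sum intind_mu)
  have intphi_nu: "integrable \<nu> \<phi>" unfolding \<phi>_def by (intro Bochner_Integration.integrable_sum intind_nu)
  have Iphi_mu: "(\<integral>x. \<phi> x \<partial>\<mu>) = (\<Sum>j\<in>{1..N}. h * measure \<mu> {real j * h<..})"
    unfolding \<phi>_def Bochner_Integration.integral_sum[OF intind_mu]
    by (simp only: integral_mult_right_zero Bochner_Integration.integral_indicator sets.Int_space_eq2[OF sets_ind(1)])
  have Iphi_nu: "(\<integral>x. \<phi> x \<partial>\<nu>) = (\<Sum>j\<in>{1..N}. h * measure \<nu> {real j * h<..})"
    unfolding \<phi>_def Bochner_Integration.integral_sum[OF intind_nu]
    by (simp only: integral_mult_right_zero Bochner_Integration.integral_indicator sets.Int_space_eq2[OF sets_ind(2)])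
  have phib: "\<phi> x \<le> x \<and> x \<le> \<phi> x + h" if "0 \<le> x \<and> x \<le> B" for x
    unfolding \<phi>_def by (rule step_approx[OF h0]) (use that hN in auto)
  have ae1: "AE x in \<mu>. x \<le> \<phi> x + h" using aemu by eventually_elim (use phib in blast)
  have ae2: "AE x in \<nu>. \<phi> x \<le> x" using aenu by eventually_elim (use phib in blast)
  have "(\<integral>x. x \<partial>\<mu>) \<le> (\<integral>x. \<phi> x + h \<partial>\<mu>)"
    using intmu intphi_mu
    by (intro integral_mono_AE ae1) auto
  also have "\<dots> = (\<Sum>j\<in>{1..N}. h * measure \<mu> {real j * h<..}) + h"
    using intphi_mu Iphi_mu by (simp add: mu.prob_space)
  also have "\<dots> \<le> (\<Sum>j\<in>{1..N}. h * (c * measure \<nu> {real j * h<..} + \<delta>)) + h"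
    using dom h0 by (intro add_right_mono sum_mono mult_left_mono) auto
  also have "\<dots> = c * (\<Sum>j\<in>{1..N}. h * measure \<nu> {real j * h<..}) + real N * h * \<delta> + h"
    by (simp add: algebra_simps sum.distrib sum_distrib_left)
  also have "\<dots> = c * (\<integral>x. \<phi> x \<partial>\<nu>) + \<delta> * B + h"
    using Iphi_nu hN by simp
  also have "\<dots> \<le> c * (\<integral>x. x \<partial>\<nu>) + \<delta> * B + h"
  proof -
    have "(\<integral>x. \<phi> x \<partial>\<nu>) \<le> (\<integral>x. x \<partial>\<nu>)"
      using intnu intphi_nu
      by (intro integral_mono_AE ae2)
    then show ?thesis using c by (simp add: mult_left_mono)
  qed
  finally show "(\<integral>x. x \<partial>\<mu>) \<le> c * (\<integral>x. x \<partial>\<nu>) + \<delta> * B + e" using he by simp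
qed



definition swp :: "nat set \<Rightarrow> (nat \<Rightarrow> 'z) \<Rightarrow> (nat \<Rightarrow> 'z) \<Rightarrow> nat \<Rightarrow> 'z" where
  "swp R S T = (\<lambda>i. if i \<in> R then T i else S i)"

lemma chain_arith:
  fixes \<epsilon> D x y s r :: real
  assumes "0 \<le> \<epsilon>" "0 \<le> D" "0 \<le> x" "0 \<le> r"
    and s: "s \<le> exp (r * \<epsilon>) * (y + r * D)" and y: "y \<le> exp \<epsilon> * x + D"
  shows "s \<le> exp ((r + 1) * \<epsilon>) * (x + (r + 1) * D)"
proof -
  have e: "exp ((r + 1) * \<epsilon>) = exp (r * \<epsilon>) * exp \<epsilon>" by (simp add: distrib_right exp_add)
  have le: "exp (r * \<epsilon>) \<le> exp ((r + 1) * \<epsilon>)" using assms by (simp add: distrib_right)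
  have "s \<le> exp (r * \<epsilon>) * (exp \<epsilon> * x + D + r * D)"
    using s y by (smt (verit) exp_gt_zero mult_left_mono)
  also have "\<dots> = exp ((r + 1) * \<epsilon>) * x + exp (r * \<epsilon>) * ((r + 1) * D)"
    unfolding e by (simp add: algebra_simps)
  also have "\<dots> \<le> exp ((r + 1) * \<epsilon>) * x + exp ((r + 1) * \<epsilon>) * ((r + 1) * D)"
    using le assms by (intro add_left_mono mult_right_mono) auto
  finally show ?thesis by (simp add: algebra_simps)
qed

lemma mono_k_arith:
  fixes \<epsilon> D x r k :: real
  assumes "0 \<le> \<epsilon>" "0 \<le> D" "0 \<le> x" "0 \<le> r" "r \<le> k"
  shows "exp (r * \<epsilon>) * (x + r * D) \<le> exp (k * \<epsilon>) * (x + k * D)"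
  using assms by (intro mult_mono) (auto intro: mult_right_mono)

lemma pow_sum_expand:
  fixes a :: "nat \<Rightarrow> real"
  assumes "finite I"
  shows "(\<Sum>i\<in>I. a i) ^ k = (\<Sum>f\<in>PiE {..<k} (\<lambda>_. I). \<Prod>j<k. a (f j))"
proof -
  have "(\<Sum>i\<in>I. a i) ^ k = (\<Prod>j<k. \<Sum>i\<in>I. a i)" by simp
  also have "\<dots> = (\<Sum>f\<in>PiE {..<k} (\<lambda>_. I). \<Prod>j<k. a (f j))"
    by (rule prod_sum_PiE) (use assms in auto)
  finally show ?thesis .
qed

lemma integrable_bounded_prob:
  fixes h :: "'a \<Rightarrow> real"
  assumes "prob_space M" "h \<in> borel_measurable M" "\<And>x. x \<in> space M \<Longrightarrow> \<bar>h x\<bar> \<le> C"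
  shows "integrable M h"
proof -
  interpret prob_space M by fact
  show ?thesis by (rule integrable_const_bound[where B=C]) (use assms in auto)
qed

locale L29 =
  fixes P :: "'z measure" and n :: nat
    and M :: "(nat \<Rightarrow> 'z) \<Rightarrow> 'z \<Rightarrow> real measure"
    and \<epsilon> \<delta> B :: real
  assumes P: "prob_space P"
    and eps: "0 \<le> \<epsilon>" and delta: "0 \<le> \<delta>"
    and M_meas: "(\<lambda>p. M (fst p) (snd p)) \<in> measurable (PiM {..<n} (\<lambda>_. P) \<Otimes>\<^sub>M P) (subprob_algebra borel)"
    and M_prob: "\<And>S z. S \<in> space (PiM {..<n} (\<lambda>_. P)) \<Longrightarrow> z \<in> space P \<Longrightarrow>
                   prob_space (M S z) \<and> sets (M S z) = sets borel"
    and M_range: "\<And>S z. S \<in> space (PiM {..<n} (\<lambda>_. P)) \<Longrightarrow> z \<in> space P \<Longrightarrow>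
                   (AE x in M S z. 0 \<le> x \<and> x \<le> B)"
    and DP: "\<And>z S S' A. z \<in> space P \<Longrightarrow> S \<in> space (PiM {..<n} (\<lambda>_. P)) \<Longrightarrow>
         S' \<in> space (PiM {..<n} (\<lambda>_. P)) \<Longrightarrow> neighbours n S S' \<Longrightarrow> A \<in> sets borel \<Longrightarrow>
         measure (M S z) A \<le> exp \<epsilon> * measure (M S' z) A + \<delta>"
begin

abbreviation Om where "Om \<equiv> PiM {..<n} (\<lambda>_::nat. P)"
abbreviation m where "m \<equiv> eval_mean M"

lemma Om_prob: "prob_space Om" by (rule prob_space_PiM) (simp add: P)

lemma PPi: "product_prob_space (\<lambda>_::nat. P)"
  by (simp add: product_prob_space_def product_prob_space_axioms_def product_sigma_finite_def
      P prob_space_imp_sigma_finite)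

lemma OO: "pair_prob_space Om Om"
  by (simp add: pair_prob_space_def pair_sigma_finite_def Om_prob prob_space_imp_sigma_finite)

lemma m_meas[measurable]: "(\<lambda>(S, z). m S z) \<in> borel_measurable (Om \<Otimes>\<^sub>M P)"
proof -
  have "(\<lambda>(S, z). m S z) = (\<lambda>\<mu>. \<integral>x. x \<partial>\<mu>) \<circ> (\<lambda>p. M (fst p) (snd p))"
    by (auto simp: eval_mean_def fun_eq_iff)
  also have "\<dots> \<in> borel_measurable (Om \<Otimes>\<^sub>M P)"
    by (rule measurable_comp[OF M_meas integral_measurable_subprob_algebra]) simp
  finally show ?thesis .
qed

lemma m_bound:
  assumes "S \<in> space Om" "z \<in> space P"
  shows "0 \<le> m S z \<and> m S z \<le> B"
proof -
  interpret prob_space "M S z" using M_prob[OF assms] by simp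
  have ae: "AE x in M S z. 0 \<le> x \<and> x \<le> B" using M_range[OF assms] .
  have "(\<lambda>x::real. x) \<in> borel_measurable (M S z)"
    unfolding measurable_cong_sets[OF conjunct2[OF M_prob[OF assms]] refl] by simp
  then have int: "integrable (M S z) (\<lambda>x. x)"
    by (intro integrable_const_bound[where B=B]) (use ae in auto)
  have "0 \<le> (\<integral>x. x \<partial>(M S z))" by (rule integral_nonneg_AE) (use ae in auto)
  moreover have "(\<integral>x. x \<partial>(M S z)) \<le> B"
    by (rule integral_le_const[OF int]) (use ae in auto)
  ultimately show ?thesis by (simp add: eval_mean_def)
qed

lemma B_nonneg: "0 \<le> B"
proof -
  obtain z where z: "z \<in> space P" using prob_space.not_empty[OF P] by blast
  obtain S where S: "S \<in> space Om" using prob_space.not_empty[OF Om_prob] by blast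
  show ?thesis using m_bound[OF S z] by simp
qed

lemma m_dp:
  assumes "S \<in> space Om" "S' \<in> space Om" "neighbours n S S'" "z \<in> space P"
  shows "m S z \<le> exp \<epsilon> * m S' z + \<delta> * B"
  unfolding eval_mean_def
  by (rule dp_expect) (use M_prob M_range DP assms delta in auto)

lemma swp_space:
  assumes "R \<subseteq> {..<n}" "S \<in> space Om" "T \<in> space Om"
  shows "swp R S T \<in> space Om"
  using assms by (auto simp: space_PiM PiE_iff swp_def extensional_def)

lemma chain:
  assumes "finite R" "R \<subseteq> {..<n}" "S \<in> space Om" "T \<in> space Om" "z \<in> space P"
  shows "m S z \<le> exp (real (card R) * \<epsilon>) * (m (swp R S T) z + real (card R) * (\<delta> * B))"
  using assms(1,2)
proof (induction R rule: finite_induct)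
  case empty
  have "swp {} S T = S" by (simp add: swp_def)
  then show ?case by simp
next
  case (insert a R)
  have IH: "m S z \<le> exp (real (card R) * \<epsilon>) * (m (swp R S T) z + real (card R) * (\<delta> * B))"
    using insert by auto
  have nb: "neighbours n (swp R S T) (swp (insert a R) S T)"
    using insert.prems unfolding neighbours_def swp_def by auto
  have sp1: "swp R S T \<in> space Om" using insert.prems assms by (intro swp_space) auto
  have sp2: "swp (insert a R) S T \<in> space Om" using insert.prems assms by (intro swp_space) auto
  have dp: "m (swp R S T) z \<le> exp \<epsilon> * m (swp (insert a R) S T) z + \<delta> * B"
    by (rule m_dp[OF sp1 sp2 nb assms(5)])
  have c: "real (card (insert a R)) = real (card R) + 1" using insert.hyps by simp
  show ?case unfolding c
    by (rule chain_arith[OF eps _ _ _ IH dp]) (use delta B_nonneg m_bound[OF sp2 assms(5)] in auto)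
qed

lemma swp_meas[measurable]:
  "(\<lambda>p. swp R (fst p) (snd p)) \<in> Om \<Otimes>\<^sub>M Om \<rightarrow>\<^sub>M Om"
  unfolding swp_def
proof (rule measurable_PiM_single')
  fix i :: nat assume "i \<in> {..<n}"
  then show "(\<lambda>p. if i \<in> R then snd p i else fst p i) \<in> Om \<Otimes>\<^sub>M Om \<rightarrow>\<^sub>M P"
    by (cases "i \<in> R") auto
next
  show "(\<lambda>\<omega> i. if i \<in> R then snd \<omega> i else fst \<omega> i) \<in> space (Om \<Otimes>\<^sub>M Om) \<rightarrow> (\<Pi>\<^sub>E i\<in>{..<n}. space P)"
  proof (rule Pi_I)
    fix \<omega> assume "\<omega> \<in> space (Om \<Otimes>\<^sub>M Om)"
    then have a: "fst \<omega> \<in> (\<Pi>\<^sub>E i\<in>{..<n}. space P)" "snd \<omega> \<in> (\<Pi>\<^sub>E i\<in>{..<n}. space P)"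
      by (simp_all add: space_pair_measure space_PiM mem_Times_iff)
    show "(\<lambda>i. if i \<in> R then snd \<omega> i else fst \<omega> i) \<in> (\<Pi>\<^sub>E i\<in>{..<n}. space P)"
    proof (rule PiE_I)
      fix i assume "i \<in> {..<n}" then show "(if i \<in> R then snd \<omega> i else fst \<omega> i) \<in> space P"
        using a by (auto dest: PiE_mem)
    next
      fix i assume "i \<notin> {..<n}" then show "(if i \<in> R then snd \<omega> i else fst \<omega> i) = undefined"
        using a by (auto simp: PiE_def extensional_def)
    qed
  qed
qed

lemma swp_distr:
  assumes R: "R \<subseteq> {..<n}"
  shows "distr (Om \<Otimes>\<^sub>M Om) Om (\<lambda>p. swp R (fst p) (snd p)) = Om"
proof -
  interpret PP: product_prob_space "\<lambda>_::nat. P" "{..<n}" by (rule PPi)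
  interpret OO: pair_prob_space Om Om by (rule OO)
  interpret P: prob_space P by (rule P)
  show ?thesis
  proof (rule PP.PiM_eqI)
    fix A assume A: "\<And>i. i \<in> {..<n} \<Longrightarrow> A i \<in> sets P"
    define A1 where "A1 i = (if i \<in> R then space P else A i)" for i
    define A2 where "A2 i = (if i \<in> R then A i else space P)" for i
    have A1s: "A1 i \<in> sets P" if "i \<in> {..<n}" for i using A that by (simp add: A1_def)
    have A2s: "A2 i \<in> sets P" if "i \<in> {..<n}" for i using A that by (simp add: A2_def)
    have Asp: "A i \<subseteq> space P" if "i \<in> {..<n}" for i using A[OF that] by (rule sets.sets_into_space)
    have pre: "(\<lambda>p. swp R (fst p) (snd p)) -` PiE {..<n} A \<inter> space (Om \<Otimes>\<^sub>M Om)
        = PiE {..<n} A1 \<times> PiE {..<n} A2"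
    proof (intro set_eqI iffI)
      fix p assume p: "p \<in> (\<lambda>p. swp R (fst p) (snd p)) -` PiE {..<n} A \<inter> space (Om \<Otimes>\<^sub>M Om)"
      obtain S T where pST: "p = (S, T)" by fastforce
      have S: "S \<in> PiE {..<n} (\<lambda>_. space P)" and T: "T \<in> PiE {..<n} (\<lambda>_. space P)"
        using p by (auto simp: pST space_pair_measure space_PiM)
      have sw: "swp R S T \<in> PiE {..<n} A" using p by (simp add: pST)
      have "S \<in> PiE {..<n} A1"
      proof (rule PiE_I)
        fix i assume i: "i \<in> {..<n}"
        show "S i \<in> A1 i"
        proof (cases "i \<in> R")
          case True then show ?thesis using PiE_mem[OF S i] by (simp add: A1_def)
        next
          case False then show ?thesis using PiE_mem[OF sw i] by (simp add: A1_def swp_def)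
        qed
      next
        fix i assume "i \<notin> {..<n}" then show "S i = undefined" using S by (auto simp: PiE_def extensional_def)
      qed
      moreover have "T \<in> PiE {..<n} A2"
      proof (rule PiE_I)
        fix i assume i: "i \<in> {..<n}"
        show "T i \<in> A2 i"
        proof (cases "i \<in> R")
          case True then show ?thesis using PiE_mem[OF sw i] by (simp add: A2_def swp_def)
        next
          case False then show ?thesis using PiE_mem[OF T i] by (simp add: A2_def)
        qed
      next
        fix i assume "i \<notin> {..<n}" then show "T i = undefined" using T by (auto simp: PiE_def extensional_def)
      qed
      ultimately show "p \<in> PiE {..<n} A1 \<times> PiE {..<n} A2" by (simp add: pST)
    next
      fix p assume p: "p \<in> PiE {..<n} A1 \<times> PiE {..<n} A2"
      obtain S T where pST: "p = (S, T)" by fastforce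
      have S: "S \<in> PiE {..<n} A1" and T: "T \<in> PiE {..<n} A2" using p by (auto simp: pST)
      have S': "S \<in> PiE {..<n} (\<lambda>_. space P)"
      proof (rule PiE_I)
        fix i assume i: "i \<in> {..<n}" then show "S i \<in> space P"
          using PiE_mem[OF S i] Asp[OF i] by (auto simp: A1_def split: if_splits)
      next
        fix i assume "i \<notin> {..<n}" then show "S i = undefined" using S by (auto simp: PiE_def extensional_def)
      qed
      have T': "T \<in> PiE {..<n} (\<lambda>_. space P)"
      proof (rule PiE_I)
        fix i assume i: "i \<in> {..<n}" then show "T i \<in> space P"
          using PiE_mem[OF T i] Asp[OF i] by (auto simp: A2_def split: if_splits)
      next
        fix i assume "i \<notin> {..<n}" then show "T i = undefined" using T by (auto simp: PiE_def extensional_def)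
      qed
      have "swp R S T \<in> PiE {..<n} A"
      proof (rule PiE_I)
        fix i assume i: "i \<in> {..<n}" then show "swp R S T i \<in> A i"
          using PiE_mem[OF S i] PiE_mem[OF T i] by (auto simp: A1_def A2_def swp_def)
      next
        fix i assume i: "i \<notin> {..<n}" then have "i \<notin> R" using R by auto
        then show "swp R S T i = undefined" using S i by (auto simp: swp_def PiE_def extensional_def)
      qed
      then show "p \<in> (\<lambda>p. swp R (fst p) (snd p)) -` PiE {..<n} A \<inter> space (Om \<Otimes>\<^sub>M Om)"
        using S' T' by (simp add: pST space_pair_measure space_PiM)
    qed
    have "emeasure (distr (Om \<Otimes>\<^sub>M Om) Om (\<lambda>p. swp R (fst p) (snd p))) (PiE {..<n} A)
        = emeasure (Om \<Otimes>\<^sub>M Om) (PiE {..<n} A1 \<times> PiE {..<n} A2)"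
      by (subst emeasure_distr) (auto simp: pre intro!: sets_PiM_I_finite A)
    also have "\<dots> = emeasure Om (PiE {..<n} A1) * emeasure Om (PiE {..<n} A2)"
      by (rule sigma_finite_measure.emeasure_pair_measure_Times[OF prob_space_imp_sigma_finite[OF Om_prob]]) (auto intro!: sets_PiM_I_finite A1s A2s)
    also have "\<dots> = (\<Prod>i\<in>{..<n}. emeasure P (A1 i)) * (\<Prod>i\<in>{..<n}. emeasure P (A2 i))"
    proof -
      have psf: "product_sigma_finite (\<lambda>_::nat. P)"
        by (simp add: product_sigma_finite_def P prob_space_imp_sigma_finite)
      have "emeasure Om (PiE {..<n} A1) = (\<Prod>i\<in>{..<n}. emeasure P (A1 i))"
        by (rule product_sigma_finite.emeasure_PiM[OF psf]) (auto intro: A1s)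
      moreover have "emeasure Om (PiE {..<n} A2) = (\<Prod>i\<in>{..<n}. emeasure P (A2 i))"
        by (rule product_sigma_finite.emeasure_PiM[OF psf]) (auto intro: A2s)
      ultimately show ?thesis by simp
    qed
    also have "\<dots> = (\<Prod>i\<in>{..<n}. emeasure P (A1 i) * emeasure P (A2 i))"
      by (simp add: prod.distrib)
    also have "\<dots> = (\<Prod>i\<in>{..<n}. emeasure P (A i))"
      by (rule prod.cong) (auto simp: A1_def A2_def prob_space.emeasure_space_1[OF P])
    finally show "emeasure (distr (Om \<Otimes>\<^sub>M Om) Om (\<lambda>p. swp R (fst p) (snd p))) (PiE {..<n} A)
        = (\<Prod>i\<in>{..<n}. emeasure P (A i))" .
  qed simp_all
qed

lemma mU: "i < n \<Longrightarrow> (\<lambda>U. m U (U i)) \<in> borel_measurable Om"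
  using measurable_Pair_compose_split[OF m_meas, of "\<lambda>U. U" Om "\<lambda>U. U i"]
  by (simp add: measurable_component_singleton)

lemma mST: "i < n \<Longrightarrow> (\<lambda>p. m (fst p) (snd p i)) \<in> borel_measurable (Om \<Otimes>\<^sub>M Om)"
  using measurable_Pair_compose_split[OF m_meas, of fst "Om \<Otimes>\<^sub>M Om" "\<lambda>p. snd p i"]
  by (simp add: measurable_compose[OF measurable_snd measurable_component_singleton])

lemma main:
  assumes k: "1 \<le> k"
  shows "(\<integral>p. (emp_eval n M (fst p) (snd p)) ^ k \<partial>(Om \<Otimes>\<^sub>M Om))
         \<le> exp (real k ^ 2 * \<epsilon>) * (\<integral>S. (emp_eval n M S S + real k * \<delta> * B) ^ k \<partial>Om)"
proof (cases "n = 0")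
  case True
  have "(\<integral>p. (emp_eval n M (fst p) (snd p)) ^ k \<partial>(Om \<Otimes>\<^sub>M Om)) = 0"
    using k True by (simp add: emp_eval_def)
  moreover have "0 \<le> (\<integral>S. (emp_eval n M S S + real k * \<delta> * B) ^ k \<partial>Om)"
    using True delta B_nonneg by (intro Bochner_Integration.integral_nonneg) (simp add: emp_eval_def)
  ultimately show ?thesis by simp
next
  case False
  then have npos: "0 < n" by simp
  define F where "F = PiE {..<k} (\<lambda>_. {..<n})"
  define c where "c = real k * \<delta> * B"
  define g where "g f U = (\<Prod>j<k. m U (U (f j)) + c)" for f :: "nat \<Rightarrow> nat" and U :: "nat \<Rightarrow> 'z"
  define \<sigma> where "\<sigma> f p = swp (f ` {..<k}) (fst p) (snd p)" for f :: "nat \<Rightarrow> nat" and p :: "(nat \<Rightarrow> 'z) \<times> (nat \<Rightarrow> 'z)"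
  define E where "E = exp (real k ^ 2 * \<epsilon>)"
  have finF: "finite F" by (simp add: F_def finite_PiE)
  have fR: "f ` {..<k} \<subseteq> {..<n}" if "f \<in> F" for f using that by (auto simp: F_def PiE_iff)
  have fj: "f j < n" if "f \<in> F" "j < k" for f j using that by (auto simp: F_def PiE_iff)
  have cardR: "card (f ` {..<k}) \<le> k" for f :: "nat \<Rightarrow> nat"
    using card_image_le[of "{..<k}" f] by simp
  have c0: "0 \<le> c" using delta B_nonneg by (simp add: c_def)
  have E0: "0 \<le> E" by (simp add: E_def)
  have Usp: "U i \<in> space P" if "U \<in> space Om" "i < n" for U i
    using that by (auto simp: space_PiM PiE_iff)
  have gm: "g f \<in> borel_measurable Om" if "f \<in> F" for f
    unfolding g_def by (intro borel_measurable_prod borel_measurable_add borel_measurable_const mU fj[OF that]) auto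
  have gb: "0 \<le> g f U \<and> g f U \<le> (B + c) ^ k" if "f \<in> F" "U \<in> space Om" for f U
  proof -
    have b: "0 \<le> m U (U (f j)) + c \<and> m U (U (f j)) + c \<le> B + c" if "j \<in> {..<k}" for j
      using m_bound[OF \<open>U \<in> space Om\<close> Usp[OF \<open>U \<in> space Om\<close> fj[OF \<open>f \<in> F\<close>]]] that c0 by auto
    have "0 \<le> g f U" unfolding g_def using b by (intro prod_nonneg) auto
    moreover have "g f U \<le> (\<Prod>j<k. B + c)" unfolding g_def by (rule prod_mono) (use b in auto)
    ultimately show ?thesis by simp
  qed
  have int_g: "integrable Om (g f)" if "f \<in> F" for f
    by (rule integrable_bounded_prob[OF Om_prob gm[OF that], where C="(B + c) ^ k"]) (use gb[OF that] in auto)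
  have spp: "fst p \<in> space Om" "snd p \<in> space Om" if "p \<in> space (Om \<Otimes>\<^sub>M Om)" for p
    using that by (auto simp: space_pair_measure)
  have \<sigma>m: "\<sigma> f \<in> Om \<Otimes>\<^sub>M Om \<rightarrow>\<^sub>M Om" for f unfolding \<sigma>_def by (rule swp_meas)
  have \<sigma>sp: "\<sigma> f p \<in> space Om" if "f \<in> F" "p \<in> space (Om \<Otimes>\<^sub>M Om)" for f p
    unfolding \<sigma>_def by (rule swp_space[OF fR[OF that(1)] spp[OF that(2)]])
  have int_g\<sigma>: "integrable (Om \<Otimes>\<^sub>M Om) (\<lambda>p. E * g f (\<sigma> f p))" if "f \<in> F" for f
  proof (rule integrable_mult_right)
    show "integrable (Om \<Otimes>\<^sub>M Om) (\<lambda>p. g f (\<sigma> f p))"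
    proof (rule integrable_bounded_prob[where C="(B + c) ^ k"])
      show "prob_space (Om \<Otimes>\<^sub>M Om)" by (rule prob_space_pair[OF Om_prob Om_prob])
      show "(\<lambda>p. g f (\<sigma> f p)) \<in> borel_measurable (Om \<Otimes>\<^sub>M Om)"
        using measurable_comp[OF \<sigma>m gm[OF that]] by (simp add: comp_def)
      fix p assume "p \<in> space (Om \<Otimes>\<^sub>M Om)"
      then show "\<bar>g f (\<sigma> f p)\<bar> \<le> (B + c) ^ k" using gb[OF that \<sigma>sp[OF that]] by auto
    qed
  qed
  have empb: "0 \<le> emp_eval n M S T \<and> emp_eval n M S T \<le> B" if "S \<in> space Om" "T \<in> space Om" for S T
  proof -
    have b: "0 \<le> m S (T i) \<and> m S (T i) \<le> B" if "i \<in> {..<n}" for i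
      using m_bound[OF \<open>S \<in> space Om\<close> Usp[OF \<open>T \<in> space Om\<close>]] that by auto
    have "0 \<le> (\<Sum>i<n. m S (T i))" using b by (intro sum_nonneg) auto
    moreover have "(\<Sum>i<n. m S (T i)) \<le> real n * B" using sum_bounded_above[of "{..<n}" "\<lambda>i. m S (T i)" B] b by auto
    ultimately show ?thesis using npos by (auto simp: emp_eval_def field_simps)
  qed
  have Lm: "(\<lambda>p. (emp_eval n M (fst p) (snd p)) ^ k) \<in> borel_measurable (Om \<Otimes>\<^sub>M Om)"
    unfolding emp_eval_def
    by (intro borel_measurable_power borel_measurable_times borel_measurable_const borel_measurable_sum mST) auto
  have int_L: "integrable (Om \<Otimes>\<^sub>M Om) (\<lambda>p. (emp_eval n M (fst p) (snd p)) ^ k)"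
  proof (rule integrable_bounded_prob[OF _ Lm, where C="B ^ k"])
    show "prob_space (Om \<Otimes>\<^sub>M Om)" by (rule prob_space_pair[OF Om_prob Om_prob])
  next
    fix p assume "p \<in> space (Om \<Otimes>\<^sub>M Om)"
    from empb[OF spp[OF this]] show "\<bar>emp_eval n M (fst p) (snd p) ^ k\<bar> \<le> B ^ k"
      by (simp add: power_mono)
  qed
  have pw: "(emp_eval n M (fst p) (snd p)) ^ k \<le> (1 / real n) ^ k * (\<Sum>f\<in>F. E * g f (\<sigma> f p))"
    if p: "p \<in> space (Om \<Otimes>\<^sub>M Om)" for p
  proof -
    obtain S T where pST: "p = (S, T)" by fastforce
    have S: "S \<in> space Om" and T: "T \<in> space Om" using spp[OF p] by (auto simp: pST)
    have "(emp_eval n M S T) ^ k = (1 / real n) ^ k * (\<Sum>i<n. m S (T i)) ^ k"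
      unfolding emp_eval_def by (rule power_mult_distrib)
    also have "\<dots> = (1 / real n) ^ k * (\<Sum>f\<in>F. \<Prod>j<k. m S (T (f j)))"
      by (simp add: pow_sum_expand F_def)
    also have "\<dots> \<le> (1 / real n) ^ k * (\<Sum>f\<in>F. E * g f (\<sigma> f p))"
    proof (intro mult_left_mono sum_mono)
      fix f assume f: "f \<in> F"
      define R where "R = f ` {..<k}"
      define U where "U = swp R S T"
      have U: "U \<in> space Om" unfolding U_def using fR[OF f] S T by (intro swp_space) (auto simp: R_def)
      have each: "0 \<le> m S (T (f j)) \<and> m S (T (f j)) \<le> exp (real k * \<epsilon>) * (m U (U (f j)) + c)"
        if j: "j \<in> {..<k}" for j
      proof -
        have z: "T (f j) \<in> space P" using Usp[OF T fj[OF f]] j by simp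
        have UT: "U (f j) = T (f j)" using j by (simp add: U_def swp_def R_def)
        have "m S (T (f j)) \<le> exp (real (card R) * \<epsilon>) * (m U (T (f j)) + real (card R) * (\<delta> * B))"
          unfolding U_def by (rule chain) (use fR[OF f] S T z in \<open>auto simp: R_def\<close>)
        also have "\<dots> \<le> exp (real k * \<epsilon>) * (m U (T (f j)) + real k * (\<delta> * B))"
          by (rule mono_k_arith) (use eps delta B_nonneg m_bound[OF U z] cardR in \<open>auto simp: R_def\<close>)
        finally show ?thesis using m_bound[OF S z] UT by (simp add: c_def mult.assoc)
      qed
      have "(\<Prod>j<k. m S (T (f j))) \<le> (\<Prod>j<k. exp (real k * \<epsilon>) * (m U (U (f j)) + c))"
        by (rule prod_mono) (use each in auto)
      also have "\<dots> = exp (real k * \<epsilon>) ^ k * g f U"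
        by (simp add: g_def prod.distrib)
      also have "exp (real k * \<epsilon>) ^ k = E"
        unfolding E_def exp_of_nat_mult[symmetric] by (simp add: power2_eq_square mult.assoc)
      finally show "(\<Prod>j<k. m S (T (f j))) \<le> E * g f (\<sigma> f p)"
        by (simp add: \<sigma>_def pST U_def R_def)
    qed simp
    finally show ?thesis by (simp add: pST)
  qed
  have "(\<integral>p. (emp_eval n M (fst p) (snd p)) ^ k \<partial>(Om \<Otimes>\<^sub>M Om))
        \<le> (\<integral>p. (1 / real n) ^ k * (\<Sum>f\<in>F. E * g f (\<sigma> f p)) \<partial>(Om \<Otimes>\<^sub>M Om))"
    by (rule integral_mono[OF int_L _ pw])
       (intro integrable_mult_right Bochner_Integration.integrable_sum int_g\<sigma>)
  also have "\<dots> = (1 / real n) ^ k * (\<Sum>f\<in>F. E * (\<integral>p. g f (\<sigma> f p) \<partial>(Om \<Otimes>\<^sub>M Om)))"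
    by (simp only: integral_mult_right_zero Bochner_Integration.integral_sum[OF int_g\<sigma>])
  also have "\<dots> = (1 / real n) ^ k * (\<Sum>f\<in>F. E * (\<integral>U. g f U \<partial>Om))"
  proof -
    have "(\<integral>p. g f (\<sigma> f p) \<partial>(Om \<Otimes>\<^sub>M Om)) = (\<integral>U. g f U \<partial>Om)" if "f \<in> F" for f
    proof -
      have "(\<integral>U. g f U \<partial>Om) = (\<integral>U. g f U \<partial>(distr (Om \<Otimes>\<^sub>M Om) Om (\<sigma> f)))"
        using swp_distr[OF fR[OF that]] by (simp add: \<sigma>_def[abs_def])
      also have "\<dots> = (\<integral>p. g f (\<sigma> f p) \<partial>(Om \<Otimes>\<^sub>M Om))"
        by (rule integral_distr[OF \<sigma>m gm[OF that]])
      finally show ?thesis by simp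
    qed
    then show ?thesis by (simp cong: sum.cong)
  qed
  also have "\<dots> = E * ((1 / real n) ^ k * (\<Sum>f\<in>F. (\<integral>U. g f U \<partial>Om)))"
    by (simp add: sum_distrib_left algebra_simps)
  also have "\<dots> = E * (\<integral>U. (1 / real n) ^ k * (\<Sum>f\<in>F. g f U) \<partial>Om)"
    by (simp only: integral_mult_right_zero Bochner_Integration.integral_sum[OF int_g])
  also have "\<dots> = E * (\<integral>S. (emp_eval n M S S + real k * \<delta> * B) ^ k \<partial>Om)"
  proof -
    have "(1 / real n) ^ k * (\<Sum>f\<in>F. g f U) = (emp_eval n M U U + real k * \<delta> * B) ^ k" for U
    proof -
      have "emp_eval n M U U + c = 1 / real n * (\<Sum>i<n. m U (U i) + c)"
        using npos by (simp add: emp_eval_def sum.distrib field_simps)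
      then have "(emp_eval n M U U + c) ^ k = (1 / real n) ^ k * (\<Sum>i<n. m U (U i) + c) ^ k"
        by (simp only: power_mult_distrib)
      also have "(\<Sum>i<n. m U (U i) + c) ^ k = (\<Sum>f\<in>F. g f U)"
        unfolding F_def g_def by (rule pow_sum_expand) simp
      finally show ?thesis by (simp add: c_def)
    qed
    then show ?thesis by simp
  qed
  finally show ?thesis by (simp add: E_def)
qed

end
theorem lemma29:
  fixes P :: "'z measure" and n :: nat
    and M :: "(nat \<Rightarrow> 'z) \<Rightarrow> 'z \<Rightarrow> real measure"
    and \<epsilon> \<delta> B :: real and k :: nat
  assumes P: "prob_space P"
    and eps: "0 \<le> \<epsilon>" and delta: "0 \<le> \<delta>"
    and M_meas: "(\<lambda>p. M (fst p) (snd p)) \<in> measurable (sample_space P n \<Otimes>\<^sub>M P) (subprob_algebra borel)"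
    and M_prob: "\<And>S z. S \<in> space (sample_space P n) \<Longrightarrow> z \<in> space P \<Longrightarrow>
                   prob_space (M S z) \<and> sets (M S z) = sets borel"
    and M_range: "\<And>S z. S \<in> space (sample_space P n) \<Longrightarrow> z \<in> space P \<Longrightarrow>
                   (AE x in M S z. 0 \<le> x \<and> x \<le> B)"
    and DP: "dp_eval P n M \<epsilon> \<delta>"
    and k: "1 \<le> k"
  shows "(\<integral>p. (emp_eval n M (fst p) (snd p)) ^ k \<partial>(sample_space P n \<Otimes>\<^sub>M sample_space P n))
         \<le> exp (real k ^ 2 * \<epsilon>) *
           (\<integral>S. (emp_eval n M S S + real k * \<delta> * B) ^ k \<partial>(sample_space P n))"
  proof -
  have h1: "(\<lambda>p. M (fst p) (snd p)) \<in> measurable (PiM {..<n} (\<lambda>_. P) \<Otimes>\<^sub>M P) (subprob_algebra borel)"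
      using M_meas by (simp add: sample_space_def)
  have h2: "\<And>S z. S \<in> space (PiM {..<n} (\<lambda>_. P)) \<Longrightarrow> z \<in> space P \<Longrightarrow>
                   prob_space (M S z) \<and> sets (M S z) = sets borel"
      using M_prob by (simp add: sample_space_def)
  have h3: "\<And>S z. S \<in> space (PiM {..<n} (\<lambda>_. P)) \<Longrightarrow> z \<in> space P \<Longrightarrow>
                   (AE x in M S z. 0 \<le> x \<and> x \<le> B)"
      using M_range by (simp add: sample_space_def)
  have h4: "\<And>z S S' A. z \<in> space P \<Longrightarrow> S \<in> space (PiM {..<n} (\<lambda>_. P)) \<Longrightarrow>
         S' \<in> space (PiM {..<n} (\<lambda>_. P)) \<Longrightarrow> neighbours n S S' \<Longrightarrow> A \<in> sets borel \<Longrightarrow>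
         measure (M S z) A \<le> exp \<epsilon> * measure (M S' z) A + \<delta>"
      using DP by (simp add: dp_eval_def sample_space_def)
  interpret L: L29 P n M \<epsilon> \<delta> B by (rule L29.intro[OF P eps delta h1 h2 h3 h4])
  show ?thesis using L.main[OF k] by (simp add: sample_space_def)
qed

end
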